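(* Let $n\ge1$, $p \in [0,1/2]$, $q=1-p$, and for $r\ge0$ let $\mu_r = \mathbb{E}(X-np)^r$ where $X\sim\mathrm{Bin}(n,p)$. Define polynomials $\nu_r(x)$ recursively by $\nu_0 = 1$, $\nu_1 = 0$ and, for $r\ge2$, \[ \nu_r(x) = x \sum_{j=0}^{r-2} \binom{r-1}{j} \nu_j(x). \] Then $\mu_r \leq \nu_r(npq)$ for every $r\ge0$. *)

theory Defs
  imports "HOL-Probability.Probability"
begin

function nu :: "nat \<Rightarrow> real \<Rightarrow> real" where
  "nu r x = (if r = 0 then 1 else if r = 1 then 0
             else x * (\<Sum>j = 0..r - 2. real ((r - 1) choose j) * nu j x))"
  by auto
termination
  by (relation "Wellfounded.measure fst") auto

definition binom_central_moment :: "nat \<Rightarrow> real \<Rightarrow> nat \<Rightarrow> real" where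
  "binom_central_moment n p r =
     measure_pmf.expectation (binomial_pmf n p) (\<lambda>k. (real k - real n * p) ^ r)"

end

theory Submission
  imports Defs "HOL-Computational_Algebra.Formal_Power_Series"
begin

unbundle no vec_syntax
notation fps_nth (infixl \<open>$\<close> 75)

declare nu.simps [simp del]

lemma nu_0 [simp]: "nu 0 x = 1"
  by (subst nu.simps) simp

lemma nu_Suc: "nu (Suc r) x = x * (\<Sum>j<r. real (r choose j) * nu j x)"
proof (cases r)
  case 0
  then show ?thesis by (subst nu.simps) simp
next
  case (Suc m)
  have "{0..Suc r - 2} = {..<r}" using Suc by auto
  then show ?thesis using Suc by (subst nu.simps) simp
qed

lemma nu_1 [simp]: "nu (Suc 0) x = 0"
  by (simp add: nu_Suc)

lemma nu_nonneg: "x \<ge> 0 \<Longrightarrow> nu r x \<ge> 0"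
proof (induction r rule: less_induct)
  case (less r)
  show ?case
  proof (cases r)
    case (Suc m)
    then show ?thesis using less by (auto simp: nu_Suc intro!: mult_nonneg_nonneg sum_nonneg)
  qed simp
qed

lemma nu_ge: assumes "x \<ge> 0" "r \<ge> 2" shows "x \<le> nu r x"
proof -
  obtain m where m: "r = Suc m" "m \<ge> 1" using assms by (cases r) auto
  have "real (m choose 0) * nu 0 x \<le> (\<Sum>j<m. real (m choose j) * nu j x)"
    by (rule member_le_sum) (use m assms nu_nonneg in auto)
  then have "1 \<le> (\<Sum>j<m. real (m choose j) * nu j x)" by simp
  then show ?thesis using m assms by (simp add: nu_Suc mult_le_cancel_left1)
qed

definition NF :: "real \<Rightarrow> real fps" where
  "NF x = Abs_fps (\<lambda>r. nu r x / fact r)"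

lemma NF_nth [simp]: "NF x $ r = nu r x / fact r"
  by (simp add: NF_def)

lemma fps_ode_unique:
  fixes f g h :: "real fps"
  assumes "fps_deriv f = h * f" "fps_deriv g = h * g" "f $ 0 = g $ 0"
  shows "f = g"
proof -
  have "\<forall>k\<le>m. f $ k = g $ k" for m
  proof (induction m)
    case 0 then show ?case using assms by simp
  next
    case (Suc m)
    have "fps_deriv f $ m = fps_deriv g $ m"
      unfolding assms(1,2) fps_mult_nth using Suc by (intro sum.cong) auto
    then have "f $ Suc m = g $ Suc m" by simp
    then show ?case using Suc le_Suc_eq by auto
  qed
  then show ?thesis by (intro fps_ext) auto
qed

lemma NF_deriv: "fps_deriv (NF x) = fps_const x * (fps_exp 1 - 1) * NF x"
proof (rule fps_ext)
  fix n
  have "(NF x * (fps_exp 1 - 1)) $ n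
      = (\<Sum>i=0..n. nu i x / fact i * (if n - i = 0 then 0 else 1 / fact (n - i)))"
    by (simp add: fps_mult_nth) (intro sum.cong, auto)
  also have "\<dots> = (\<Sum>i<n. nu i x / fact i * (1 / fact (n - i)))"
  proof -
    have "{0..n} = insert n {..<n}" by auto
    then show ?thesis by (simp add: sum.insert mult.commute)
  qed
  also have "\<dots> = (\<Sum>i<n. real (n choose i) * nu i x) / fact n"
    unfolding sum_divide_distrib
    by (intro sum.cong) (auto simp: binomial_fact field_simps)
  finally have A: "(NF x * (fps_exp 1 - 1)) $ n = (\<Sum>i<n. real (n choose i) * nu i x) / fact n" .
  have "fps_deriv (NF x) $ n = nu (Suc n) x / fact n"
  proof -
    have "fps_deriv (NF x) $ n = real (Suc n) * (nu (Suc n) x / (real (Suc n) * fact n))"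
      unfolding fps_deriv_nth NF_nth fact_Suc by simp
    also have "\<dots> = nu (Suc n) x / fact n"
      by (simp del: of_nat_Suc)
    finally show ?thesis .
  qed
  then show "fps_deriv (NF x) $ n = (fps_const x * (fps_exp 1 - 1) * NF x) $ n"
  proof -
    have "fps_const x * (fps_exp 1 - 1) * NF x = fps_const x * (NF x * (fps_exp 1 - 1))"
      by (simp add: ac_simps)
    then have "(fps_const x * (fps_exp 1 - 1) * NF x) $ n = x * (NF x * (fps_exp 1 - 1)) $ n"
      by (simp only: fps_mult_left_const_nth)
    then show ?thesis using A \<open>fps_deriv (NF x) $ n = _\<close> by (simp add: nu_Suc)
  qed
qed

lemma NF_add: "NF (x + y) = NF x * NF y"
proof (rule fps_ode_unique[where h = "fps_const (x + y) * (fps_exp 1 - 1)"])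
  show "fps_deriv (NF (x + y)) = fps_const (x + y) * (fps_exp 1 - 1) * NF (x + y)"
    by (rule NF_deriv)
  show "fps_deriv (NF x * NF y) = fps_const (x + y) * (fps_exp 1 - 1) * (NF x * NF y)"
    by (simp add: NF_deriv algebra_simps flip: fps_const_add)
qed simp

lemma nu_add: "nu r (x + y) = (\<Sum>j\<le>r. real (r choose j) * nu j x * nu (r - j) y)"
proof -
  have "nu r (x + y) / fact r = (NF x * NF y) $ r" by (simp add: NF_add[symmetric])
  also have "\<dots> = (\<Sum>j\<le>r. nu j x / fact j * (nu (r - j) y / fact (r - j)))"
    by (simp add: fps_mult_nth atLeast0AtMost)
  also have "\<dots> = (\<Sum>j\<le>r. real (r choose j) * nu j x * nu (r - j) y) / fact r"
    unfolding sum_divide_distrib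
    by (intro sum.cong) (auto simp: binomial_fact field_simps)
  finally show ?thesis by (simp add: field_simps)
qed

definition EB :: "nat \<Rightarrow> real \<Rightarrow> (nat \<Rightarrow> real) \<Rightarrow> real" where
  "EB n p f = (\<Sum>k\<le>n. real (n choose k) * p ^ k * (1 - p) ^ (n - k) * f k)"

lemma EB_Suc: "EB (Suc n) p f = p * EB n p (\<lambda>k. f (Suc k)) + (1 - p) * EB n p f"
proof -
  let ?q = "1 - p"
  let ?g = "\<lambda>k. real (n choose k) * p ^ k * ?q ^ (Suc n - k) * f k"
  let ?S2 = "\<Sum>k\<le>n. real (n choose Suc k) * p ^ Suc k * ?q ^ (n - k) * f (Suc k)"
  have A: "EB (Suc n) p f = ?q ^ Suc n * f 0 +
     (\<Sum>k\<le>n. real (n choose k) * p ^ Suc k * ?q ^ (n - k) * f (Suc k)) + ?S2"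
    unfolding EB_def by (subst sum.atMost_Suc_shift) (simp add: sum.distrib algebra_simps)
  have B: "(\<Sum>k\<le>n. real (n choose k) * p ^ Suc k * ?q ^ (n - k) * f (Suc k))
      = p * EB n p (\<lambda>k. f (Suc k))"
    unfolding EB_def sum_distrib_left by (intro sum.cong) auto
  have C: "?q ^ Suc n * f 0 + ?S2 = (\<Sum>k\<le>Suc n. ?g k)"
    by (subst sum.atMost_Suc_shift) simp
  have D: "(\<Sum>k\<le>Suc n. ?g k) = (\<Sum>k\<le>n. ?g k)" by simp
  have E: "(\<Sum>k\<le>n. ?g k) = ?q * EB n p f"
    unfolding EB_def sum_distrib_left
    by (intro sum.cong refl) (simp add: Suc_diff_le)
  show ?thesis using A B C D E by simp
qed

lemma EB_sum: "EB n p (\<lambda>k. \<Sum>j\<in>A. g j k) = (\<Sum>j\<in>A. EB n p (g j))"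
  unfolding EB_def sum_distrib_left by (subst sum.swap) (simp add: ac_simps)

lemma EB_cmult: "EB n p (\<lambda>k. c * g k) = c * EB n p g"
  unfolding EB_def by (simp add: sum_distrib_left ac_simps)

definition MB :: "nat \<Rightarrow> real \<Rightarrow> nat \<Rightarrow> real" where
  "MB n p r = EB n p (\<lambda>k. (real k - real n * p) ^ r)"

definition cB :: "real \<Rightarrow> nat \<Rightarrow> real" where
  "cB p k = p * (1 - p) ^ k + (1 - p) * (- p) ^ k"

lemma MB_Suc: "MB (Suc n) p r = (\<Sum>j\<le>r. real (r choose j) * MB n p j * cB p (r - j))"
proof -
  have 1: "(real (Suc k) - real (Suc n) * p) ^ r
      = (\<Sum>j\<le>r. real (r choose j) * (real k - real n * p) ^ j * (1 - p) ^ (r - j))" for k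
  proof -
    have e: "real (Suc k) - real (Suc n) * p = (real k - real n * p) + (1 - p)"
      by (simp add: algebra_simps)
    show ?thesis unfolding e binomial_ring by simp
  qed
  have 2: "(real k - real (Suc n) * p) ^ r
      = (\<Sum>j\<le>r. real (r choose j) * (real k - real n * p) ^ j * (- p) ^ (r - j))" for k
  proof -
    have e: "real k - real (Suc n) * p = (real k - real n * p) + (- p)"
      by (simp add: algebra_simps)
    show ?thesis unfolding e binomial_ring by simp
  qed
  have 3: "EB n p (\<lambda>k. (real (Suc k) - real (Suc n) * p) ^ r)
      = (\<Sum>j\<le>r. (real (r choose j) * (1 - p) ^ (r - j)) * MB n p j)"
    unfolding 1 EB_sum MB_def
    by (intro sum.cong refl) (simp add: EB_cmult[symmetric] ac_simps)
  have 4: "EB n p (\<lambda>k. (real k - real (Suc n) * p) ^ r)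
      = (\<Sum>j\<le>r. (real (r choose j) * (- p) ^ (r - j)) * MB n p j)"
    unfolding 2 EB_sum MB_def
    by (intro sum.cong refl) (simp add: EB_cmult[symmetric] ac_simps)
  have "MB (Suc n) p r = p * EB n p (\<lambda>k. (real (Suc k) - real (Suc n) * p) ^ r)
      + (1 - p) * EB n p (\<lambda>k. (real k - real (Suc n) * p) ^ r)"
    unfolding MB_def by (rule EB_Suc)
  also have "\<dots> = p * (\<Sum>j\<le>r. (real (r choose j) * (1 - p) ^ (r - j)) * MB n p j)
      + (1 - p) * (\<Sum>j\<le>r. (real (r choose j) * (- p) ^ (r - j)) * MB n p j)"
    unfolding 3 4 ..
  also have "\<dots> = (\<Sum>j\<le>r. real (r choose j) * MB n p j * cB p (r - j))"
    unfolding cB_def sum_distrib_left sum.distrib[symmetric]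
    by (intro sum.cong) (auto simp: algebra_simps)
  finally show ?thesis .
qed

lemma cB_bound:
  assumes "0 \<le> p" "p \<le> 1"
  shows "\<bar>cB p k\<bar> \<le> nu k (p * (1 - p))"
proof -
  consider "k = 0" | "k = 1" | "k \<ge> 2" by linarith
  then show ?thesis
  proof cases
    case 1 then show ?thesis by (simp add: cB_def)
  next
    case 2 then show ?thesis by (simp add: cB_def algebra_simps)
  next
    case 3
    then obtain m where m: "k = Suc (Suc m)" by (metis add_2_eq_Suc le_Suc_ex)
    have a: "(1 - p) ^ Suc m \<le> 1 - p"
      using assms by (simp add: mult_left_le power_le_one)
    have b: "p ^ Suc m \<le> p"
      using assms by (simp add: mult_left_le power_le_one)
    have "\<bar>cB p k\<bar> \<le> p * (1 - p) ^ k + (1 - p) * p ^ k"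
      unfolding cB_def using assms
      by (intro order_trans[OF abs_triangle_ineq] add_mono) (simp_all add: abs_mult power_abs)
    also have "\<dots> = p * (1 - p) * ((1 - p) ^ Suc m + p ^ Suc m)"
      by (simp add: m algebra_simps)
    also have "\<dots> \<le> p * (1 - p) * ((1 - p) + p)"
      using a b assms by (intro mult_left_mono add_mono) auto
    also have "\<dots> = p * (1 - p)" by simp
    also have "\<dots> \<le> nu k (p * (1 - p))"
      using 3 assms by (intro nu_ge) auto
    finally show ?thesis .
  qed
qed

lemma MB_bound:
  assumes "0 \<le> p" "p \<le> 1"
  shows "\<bar>MB n p r\<bar> \<le> nu r (real n * (p * (1 - p)))"
proof (induction n arbitrary: r)
  case 0
  then show ?case by (cases r) (simp_all add: MB_def EB_def nu_Suc)
next
  case (Suc n)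
  have pq: "0 \<le> p * (1 - p)" using assms by simp
  have "\<bar>MB (Suc n) p r\<bar> \<le> (\<Sum>j\<le>r. \<bar>real (r choose j) * MB n p j * cB p (r - j)\<bar>)"
    unfolding MB_Suc by (rule sum_abs)
  also have "\<dots> \<le> (\<Sum>j\<le>r. real (r choose j) * nu j (real n * (p * (1 - p)))
                     * nu (r - j) (p * (1 - p)))"
    unfolding abs_mult
    by (intro sum_mono mult_mono Suc cB_bound assms)
       (auto intro!: nu_nonneg mult_nonneg_nonneg pq)
  also have "\<dots> = nu r (real n * (p * (1 - p)) + p * (1 - p))"
    by (rule nu_add[symmetric])
  also have "real n * (p * (1 - p)) + p * (1 - p) = real (Suc n) * (p * (1 - p))"
    by (simp add: algebra_simps)
  finally show ?case .
qed

theorem proposition18: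
  fixes n r :: nat and p q :: real
  assumes "n \<ge> 1" and "0 \<le> p" and "p \<le> 1 / 2" and "q = 1 - p"
  shows "binom_central_moment n p r \<le> nu r (real n * p * q)"
proof -
  have p: "p \<in> {0..1}" using assms by auto
  have "binom_central_moment n p r = MB n p r"
    unfolding binom_central_moment_def MB_def EB_def
    using p by (subst expectation_binomial_pmf') auto
  also have "\<dots> \<le> \<bar>MB n p r\<bar>" by simp
  also have "\<dots> \<le> nu r (real n * (p * (1 - p)))"
    using assms by (intro MB_bound) auto
  finally show ?thesis using assms by (simp add: mult.assoc)
qed

end
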